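(* Assume $\ln(2d)\ge1$, zero noise ($y=f^*(x)$), $f^*\in\mathcal{B}_2(X)$, and $\lambda\ge\lambda_n=4\sqrt{2\ln(2d)/n}$. Let $\tilde\theta$ be width-$m$ parameters with $\|\tilde\theta\|_{\mathcal{P}}\le2\gamma_2(f^* )$ (as given by the approximation theorem: $\mathbb{E}_x[(f^*(x)-\sum_ka_k\sigma(w_k^Tx))^2]\le3\gamma_2^2(f^* )/m$ and $\|\tilde\theta\|_{\mathcal{P}}\le2\gamma_2(f^* )$). Then for any $\delta>0$, with probability at least $1-\delta$ over the training set, $$J_\lambda(\tilde\theta)\le L(\tilde\theta)+8\lambda\hat\gamma_2(f^* )+2\sqrt{\frac{2\ln(2c/\delta)}{n}},$$ where $c=\sum_{k=1}^\infty1/k^2$.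
   Context: Setting: samples $(x,y)$ i.i.d. with $x\in X=[-1,1]^d$, $f^*(x)=\mathbb{E}[y\mid x]$, $0\le f^*\le1$. $\sigma$ is $1$-Lipschitz and positively homogeneous. Width-$m$ network: $f(x;\theta)=T\big(\sum_{k=1}^m a_k\sigma(w_k^Tx)\big)$, $T(t)=\max\{\min\{t,1\},0\}$. Path norm $\|\theta\|_{\mathcal{P}}=\sum_k|a_k|\|w_k\|_1$. Loss $\ell(y,y')=\frac12(y-y')^2$; $L(\theta)=\mathbb{E}_{x,y}[\ell(f(x;\theta),y)]$; $\hat L_n(\theta)=\frac1n\sum_i\ell(f(x_i;\theta),y_i)$; $J_\lambda(\theta)=\hat L_n(\theta)+\lambda(\|\theta\|_{\mathcal{P}}+1)$. Barron space: $\mathbb{S}^d=\{w:\|w\|_1=1\}$; $\mathcal{B}(X)$ is the set of $f$ with $f(x)=\int_{\mathbb{S}^d}a(w)\sigma(\langle w,x\rangle)d\pi(w)$ on $X$ for a Borel probability measure $\pi$ on $\mathbb{S}^d$ and measurable $a$ (set of such $(a,\pi)$: $\Theta_f$); $\gamma_p(f)=\inf_{(a,\pi)\in\Theta_f}(\int|a|^pd\pi)^{1/p}$; $\mathcal{B}_p(X)=\{f:\gamma_p(f)<\infty\}$; $\hat\gamma_p(f)=\max\{1,\gamma_p(f)\}$. *)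

theory Defs
  imports "HOL-Probability.Probability"
begin

text \<open>Input domain X = [-1,1]^d, inputs are vectors of type real^'d with d = CARD('d).\<close>
definition cube :: "(real^'d) set" where
  "cube = {x. \<forall>i. \<bar>x $ i\<bar> \<le> 1}"

definition l1norm :: "real^'d \<Rightarrow> real" where
  "l1norm w = (\<Sum>i\<in>UNIV. \<bar>w $ i\<bar>)"

definition sphere1 :: "(real^'d) set" where
  "sphere1 = {w. l1norm w = 1}"

definition clip :: "real \<Rightarrow> real" where
  "clip t = max (min t 1) 0"

text \<open>Width-m network, parameters theta = (a_k, w_k)_{k<m}.\<close>
definition net :: "(real \<Rightarrow> real) \<Rightarrow> nat \<Rightarrow> (nat \<Rightarrow> real) \<Rightarrow> (nat \<Rightarrow> real^'d) \<Rightarrow> real^'d \<Rightarrow> real" where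
  "net \<sigma> m a w x = clip (\<Sum>k<m. a k * \<sigma> (w k \<bullet> x))"

definition path_norm :: "nat \<Rightarrow> (nat \<Rightarrow> real) \<Rightarrow> (nat \<Rightarrow> real^'d) \<Rightarrow> real" where
  "path_norm m a w = (\<Sum>k<m. \<bar>a k\<bar> * l1norm (w k))"

definition sq_loss :: "real \<Rightarrow> real \<Rightarrow> real" where
  "sq_loss y y' = (1/2) * (y - y')^2"

text \<open>Zero noise: y = fs x. Population risk L(theta).\<close>
definition pop_risk :: "(real^'d) measure \<Rightarrow> (real^'d \<Rightarrow> real) \<Rightarrow> (real \<Rightarrow> real) \<Rightarrow> nat
    \<Rightarrow> (nat \<Rightarrow> real) \<Rightarrow> (nat \<Rightarrow> real^'d) \<Rightarrow> real" where
  "pop_risk \<mu> fs \<sigma> m a w = (\<integral>x. sq_loss (net \<sigma> m a w x) (fs x) \<partial>\<mu>)"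

definition emp_risk :: "(real^'d \<Rightarrow> real) \<Rightarrow> (real \<Rightarrow> real) \<Rightarrow> nat \<Rightarrow> (nat \<Rightarrow> real)
    \<Rightarrow> (nat \<Rightarrow> real^'d) \<Rightarrow> nat \<Rightarrow> (nat \<Rightarrow> real^'d) \<Rightarrow> real" where
  "emp_risk fs \<sigma> m a w n xs = (\<Sum>i<n. sq_loss (net \<sigma> m a w (xs i)) (fs (xs i))) / real n"

definition J_reg :: "real \<Rightarrow> (real^'d \<Rightarrow> real) \<Rightarrow> (real \<Rightarrow> real) \<Rightarrow> nat \<Rightarrow> (nat \<Rightarrow> real)
    \<Rightarrow> (nat \<Rightarrow> real^'d) \<Rightarrow> nat \<Rightarrow> (nat \<Rightarrow> real^'d) \<Rightarrow> real" where
  "J_reg lam fs \<sigma> m a w n xs = emp_risk fs \<sigma> m a w n xs + lam * (path_norm m a w + 1)"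

definition Barron_rep :: "(real \<Rightarrow> real) \<Rightarrow> (real^'d \<Rightarrow> real)
    \<Rightarrow> ((real^'d \<Rightarrow> real) \<times> (real^'d) measure) set" where
  "Barron_rep \<sigma> f = {(a, \<pi>). prob_space \<pi> \<and> sets \<pi> = sets borel \<and> emeasure \<pi> sphere1 = 1
      \<and> a \<in> borel_measurable \<pi>
      \<and> (\<forall>x\<in>cube. integrable \<pi> (\<lambda>w. a w * \<sigma> (w \<bullet> x))
                  \<and> f x = (\<integral>w. a w * \<sigma> (w \<bullet> x) \<partial>\<pi>))}"

definition in_Barron2 :: "(real \<Rightarrow> real) \<Rightarrow> (real^'d \<Rightarrow> real) \<Rightarrow> bool" where
  "in_Barron2 \<sigma> f \<longleftrightarrow> (\<exists>(a, \<pi>)\<in>Barron_rep \<sigma> f. integrable \<pi> (\<lambda>w. (a w)^2))"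

text \<open>gamma_2(f) (as a real number; meaningful for f in B_2, where the set is nonempty).\<close>
definition gamma2 :: "(real \<Rightarrow> real) \<Rightarrow> (real^'d \<Rightarrow> real) \<Rightarrow> real" where
  "gamma2 \<sigma> f = Inf {sqrt (\<integral>w. (a w)^2 \<partial>\<pi>) | a \<pi>.
      (a, \<pi>) \<in> Barron_rep \<sigma> f \<and> integrable \<pi> (\<lambda>w. (a w)^2)}"

definition gamma2_hat :: "(real \<Rightarrow> real) \<Rightarrow> (real^'d \<Rightarrow> real) \<Rightarrow> real" where
  "gamma2_hat \<sigma> f = max 1 (gamma2 \<sigma> f)"

end

theory Submission imports Defs begin
lemma sig_meas: assumes "\<forall>s t. \<bar>\<sigma> s - \<sigma> t\<bar> \<le> \<bar>s - t\<bar>" shows "(\<sigma>::real\<Rightarrow>real) \<in> borel_measurable borel"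
proof -
  have "continuous_on UNIV \<sigma>"
    unfolding continuous_on_iff dist_real_def
    using assms by (metis le_less_trans)
  then show ?thesis by (rule borel_measurable_continuous_onI)
qed
lemma net_meas[measurable]: assumes "\<sigma> \<in> borel_measurable borel" shows "(\<lambda>x. net \<sigma> m a w x) \<in> borel_measurable (borel::(real^'d) measure)"
  unfolding net_def clip_def using assms by measurable

lemma c_ge1: "(\<Sum>k. 1 / (real (Suc k))^2) \<ge> 1"
proof -
  have s: "summable (\<lambda>k. 1 / (real (Suc k))^2)"
    using inverse_power_summable[of 2, where 'a=real] 
    by (subst summable_Suc_iff) (simp add: inverse_eq_divide)
  have "(\<Sum>k\<in>{0}. 1 / (real (Suc k))^2) \<le> (\<Sum>k. 1 / (real (Suc k))^2)"
    by (rule sum_le_suminf[OF s]) auto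
  then show ?thesis by simp
qed

lemma coord_indep:
  fixes \<mu> :: "'a measure" and I :: "'i set"
  assumes "prob_space \<mu>" "I \<noteq> {}"
  shows "prob_space.indep_vars (PiM I (\<lambda>_. \<mu>)) (\<lambda>_. \<mu>) (\<lambda>i \<omega>. \<omega> i) I"
proof -
  interpret P: prob_space "PiM I (\<lambda>_. \<mu>)" by (rule prob_space_PiM) (use assms in auto)
  show ?thesis
  proof (subst P.indep_vars_iff_distr_eq_PiM')
    show "I \<noteq> {}" by fact
    show "\<And>i. i \<in> I \<Longrightarrow> (\<lambda>\<omega>. \<omega> i) \<in> measurable (PiM I (\<lambda>_. \<mu>)) \<mu>" by (auto intro!: measurable_component_singleton)
    have "distr (PiM I (\<lambda>_. \<mu>)) (PiM I (\<lambda>_. \<mu>)) (\<lambda>x. \<lambda>i\<in>I. x i) = distr (PiM I (\<lambda>_. \<mu>)) (PiM I (\<lambda>_. \<mu>)) (\<lambda>x. x)"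
      by (rule distr_cong) (auto simp: space_PiM PiE_def extensional_def restrict_def fun_eq_iff)
    also have "\<dots> = PiM I (\<lambda>_. \<mu>)" by (rule distr_id)
    also have "\<dots> = PiM I (\<lambda>i. distr (PiM I (\<lambda>_. \<mu>)) \<mu> (\<lambda>\<omega>. \<omega> i))"
      by (rule PiM_cong) (auto simp: assms distr_PiM_component[where M="\<lambda>_. \<mu>", simplified])
    finally show "distr (PiM I (\<lambda>_. \<mu>)) (PiM I (\<lambda>_. \<mu>)) (\<lambda>x. \<lambda>i\<in>I. x i) = PiM I (\<lambda>i. distr (PiM I (\<lambda>_. \<mu>)) \<mu> (\<lambda>\<omega>. \<omega> i))" .
  qed
qed

theorem mainTheorem6:
  fixes \<sigma> :: "real \<Rightarrow> real" and \<mu> :: "(real^'d) measure" and fs :: "real^'d \<Rightarrow> real"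
    and m n :: nat and a :: "nat \<Rightarrow> real" and w :: "nat \<Rightarrow> real^'d" and lam \<delta> :: real
  assumes ln_d: "ln (2 * real CARD('d)) \<ge> 1"
    and sigma_lip: "\<forall>s t. \<bar>\<sigma> s - \<sigma> t\<bar> \<le> \<bar>s - t\<bar>"
    and sigma_hom: "\<forall>c t. c \<ge> 0 \<longrightarrow> \<sigma> (c * t) = c * \<sigma> t"
    and mu_prob: "prob_space \<mu>" and mu_sets: "sets \<mu> = sets borel"
    and mu_supp: "AE x in \<mu>. x \<in> cube"
    and fs_meas: "fs \<in> borel_measurable borel"
    and fs_range: "\<forall>x\<in>cube. 0 \<le> fs x \<and> fs x \<le> 1"
    and fs_Barron: "in_Barron2 \<sigma> fs"
    and n_pos: "n > 0"
    and lam_ge: "lam \<ge> 4 * sqrt (2 * ln (2 * real CARD('d)) / real n)"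
    and m_pos: "m > 0"
    and approx: "(\<integral>x. (fs x - (\<Sum>k<m. a k * \<sigma> (w k \<bullet> x)))^2 \<partial>\<mu>) \<le> 3 * (gamma2 \<sigma> fs)^2 / real m"
    and pnorm: "path_norm m a w \<le> 2 * gamma2 \<sigma> fs"
    and delta_pos: "\<delta> > 0"
  shows "measure (PiM {..<n} (\<lambda>_. \<mu>))
           {xs \<in> space (PiM {..<n} (\<lambda>_. \<mu>)).
              J_reg lam fs \<sigma> m a w n xs
                \<le> pop_risk \<mu> fs \<sigma> m a w + 8 * lam * gamma2_hat \<sigma> fs
                  + 2 * sqrt (2 * ln (2 * (\<Sum>k. 1 / (real (Suc k))^2) / \<delta>) / real n)}
         \<ge> 1 - \<delta>"
proof (cases "\<delta> \<ge> 1")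
  case True
  then show ?thesis by (smt (verit) measure_nonneg)
next
  case False
  hence d1: "\<delta> < 1" by simp
  define c where "c = (\<Sum>k. 1 / (real (Suc k))^2)"
  have c1: "c \<ge> 1" unfolding c_def by (rule c_ge1)
  define L where "L = ln (2 * c / \<delta>)"
  have L0: "L \<ge> 0" unfolding L_def using c1 d1 delta_pos by (simp add: field_simps)
  define eps where "eps = 2 * sqrt (2 * L / real n)"
  have eps0: "eps \<ge> 0" unfolding eps_def using L0 by simp
  define M where "M = PiM {..<n} (\<lambda>_. \<mu>)"
  interpret M: prob_space M unfolding M_def by (rule prob_space_PiM) (use mu_prob in auto)
  have sigm: "\<sigma> \<in> borel_measurable borel" by (rule sig_meas[OF sigma_lip])
  define g where "g x = sq_loss (net \<sigma> m a w x) (fs x)" for x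
  have gm: "g \<in> borel_measurable \<mu>"
    unfolding g_def sq_loss_def using sigm fs_meas mu_sets
    by (simp add: measurable_cong_sets[OF mu_sets refl]) measurable
  define X where "X i \<omega> = g (\<omega> i)" for i and \<omega> :: "nat \<Rightarrow> real^'d"
  have Xm: "X i \<in> borel_measurable M" if "i < n" for i
    unfolding X_def[abs_def] M_def
    by (rule measurable_compose[OF measurable_component_singleton[where M="\<lambda>_. \<mu>" and I="{..<n}"] gm]) (use that in simp)
  have ind: "M.indep_vars (\<lambda>_. borel) X {..<n}"
  proof -
    have "M.indep_vars (\<lambda>_. \<mu>) (\<lambda>i \<omega>. \<omega> i) {..<n}"
      unfolding M_def by (rule coord_indep[OF mu_prob]) (use n_pos in auto)
    then have "M.indep_vars (\<lambda>_. borel) (\<lambda>i \<omega>. g (\<omega> i)) {..<n}"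
      by (rule M.indep_vars_compose2) (rule gm)
    then show ?thesis by (simp add: X_def[abs_def])
  qed
  have distr_comp: "distr M \<mu> (\<lambda>\<omega>. \<omega> i) = \<mu>" if "i < n" for i
    unfolding M_def by (rule distr_PiM_component) (use mu_prob that in auto)
  have distrX: "distr M borel (X i) = distr \<mu> borel g" if "i < n" for i
  proof -
    have "distr M borel (X i) = distr M borel (g \<circ> (\<lambda>\<omega>. \<omega> i))" by (simp add: X_def[abs_def] o_def)
    also have "\<dots> = distr (distr M \<mu> (\<lambda>\<omega>. \<omega> i)) borel g"
      by (rule distr_distr[symmetric]) (use gm that in \<open>auto simp: M_def\<close>)
    finally show ?thesis using distr_comp[OF that] by simp
  qed
  have gbd: "AE x in \<mu>. g x \<in> {0..1/2}"
    using mu_supp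
  proof (rule AE_mp, intro AE_I2 impI)
    fix x :: "real^'d" assume "x \<in> cube"
    then have "0 \<le> fs x" "fs x \<le> 1" using fs_range by auto
    moreover have "0 \<le> net \<sigma> m a w x" "net \<sigma> m a w x \<le> 1" unfolding net_def clip_def by auto
    ultimately have "(net \<sigma> m a w x - fs x)^2 \<le> 1"
      by (subst abs_square_le_1) auto
    then show "g x \<in> {0..1/2}" unfolding g_def sq_loss_def by auto
  qed
  have Ybd: "AE \<omega> in M. X 0 \<omega> \<in> {0..1/2}"
    unfolding M_def X_def by (rule AE_PiM_component) (use mu_prob n_pos gbd in auto)
  interpret H: Hoeffding_ineq_iid M "{..<n}" X "X 0" 0 "1/2" "M.expectation (X 0)"
  proof unfold_locales
    show "finite {..<n}" by simp
    show "M.indep_vars (\<lambda>_. borel) X {..<n}" by (rule ind)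
    show "distr M borel (X i) = distr M borel (X 0)" if "i \<in> {..<n}" for i
      using distrX[of i] distrX[of 0] that n_pos by simp
    show "X 0 \<in> borel_measurable M" using Xm n_pos by simp
    show "AE x in M. X 0 x \<in> {0..1/2}" by (rule Ybd)
  qed
  have EX: "M.expectation (X 0) = pop_risk \<mu> fs \<sigma> m a w"
  proof -
    have "M.expectation (X 0) = (\<integral>x. g x \<partial>distr M \<mu> (\<lambda>\<omega>. \<omega> 0))"
      unfolding X_def by (rule integral_distr[symmetric]) (use gm n_pos in \<open>auto simp: M_def intro!: measurable_component_singleton\<close>)
    also have "\<dots> = pop_risk \<mu> fs \<sigma> m a w" using distr_comp[of 0] n_pos by (simp add: pop_risk_def g_def)
    finally show ?thesis .
  qed
  have half: "0 < (1/2::real)" by simp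
  have ne: "{..<n} \<noteq> {}" using n_pos by auto
  note hb0 = H.Hoeffding_ineq_ge'[OF eps0 half ne, unfolded card_lessThan]
  have expeq: "- 2 * real n * eps\<^sup>2 / (1 / 2 - 0)\<^sup>2 = - 64 * L"
  proof -
    have "eps\<^sup>2 = 4 * (2 * L / real n)" unfolding eps_def using L0
      by (simp add: power_mult_distrib)
    then show ?thesis using n_pos by (simp add: field_simps)
  qed
  have "exp (- 64 * L) \<le> exp (- L)" using L0 by simp
  also have "exp (- L) = \<delta> / (2 * c)" unfolding L_def using c1 delta_pos
    by (simp add: exp_minus ln_div exp_diff)
  also have "\<dots> \<le> \<delta>" using c1 delta_pos by (simp add: field_simps)
  finally have eb: "exp (- 64 * L) \<le> \<delta>" .
  define S where "S x = (\<Sum>i<n. X i x)" for x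
  have Sm[measurable]: "S \<in> borel_measurable M"
    unfolding S_def by (rule borel_measurable_sum) (use Xm in auto)
  define bad where "bad = {x \<in> space M. M.expectation (X 0) + eps \<le> S x / real n}"
  have badm: "bad \<in> sets M" unfolding bad_def by measurable
  have pbad: "M.prob bad \<le> \<delta>" using hb0 expeq eb unfolding bad_def S_def by simp
  have Jeq: "J_reg lam fs \<sigma> m a w n xs = S xs / real n + lam * (path_norm m a w + 1)" for xs
    unfolding J_reg_def emp_risk_def S_def X_def g_def by simp
  have lam0: "lam \<ge> 0" using lam_ge by (smt (verit) real_sqrt_ge_zero divide_nonneg_nonneg ln_d of_nat_0_le_iff)
  have pn: "path_norm m a w + 1 \<le> 8 * gamma2_hat \<sigma> fs"
    using pnorm unfolding gamma2_hat_def by linarith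
  have lp: "lam * (path_norm m a w + 1) \<le> 8 * lam * gamma2_hat \<sigma> fs"
    using mult_left_mono[OF pn lam0] by simp
  define T where "T = {xs \<in> space M. S xs / real n + lam * (path_norm m a w + 1)
                \<le> pop_risk \<mu> fs \<sigma> m a w + 8 * lam * gamma2_hat \<sigma> fs + eps}"
  have Tm: "T \<in> sets M" unfolding T_def by measurable
  have sub: "space M - bad \<subseteq> T"
    unfolding T_def bad_def using lp EX by auto
  have "1 - \<delta> \<le> 1 - M.prob bad" using pbad by simp
  also have "\<dots> = M.prob (space M - bad)" using M.prob_compl[OF badm] by simp
  also have "\<dots> \<le> M.prob T" by (rule M.finite_measure_mono[OF sub Tm])
  finally have "1 - \<delta> \<le> M.prob T" .
  moreover have "T = {xs \<in> space (PiM {..<n} (\<lambda>_. \<mu>)).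
              J_reg lam fs \<sigma> m a w n xs
                \<le> pop_risk \<mu> fs \<sigma> m a w + 8 * lam * gamma2_hat \<sigma> fs
                  + 2 * sqrt (2 * ln (2 * (\<Sum>k. 1 / (real (Suc k))^2) / \<delta>) / real n)}"
    unfolding T_def Jeq M_def eps_def L_def c_def ..
  ultimately show ?thesis unfolding M_def by simp
qed
end
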